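(* Let $n\le m$ and $0<\rho<n$. Every $(n,k)$ linear code over $\mathrm{GF}(q^m)$ with rank covering radius $\rho$ satisfies $$\left\lfloor n-\rho-\frac{\rho(n-\rho)+\sigma(q)}{m}\right\rfloor+1\le k\le n-\rho.$$
   Context: The rank $\mathrm{rk}(\mathbf x)$ of $\mathbf x\in\mathrm{GF}(q^m)^n$ is the maximum number of its coordinates linearly independent over $\mathrm{GF}(q)$, and $d_{\mathrm R}(\mathbf x,\mathbf y)=\mathrm{rk}(\mathbf x-\mathbf y)$. The rank covering radius of a code $C$ is $\max_{\mathbf x}\min_{\mathbf c\in C}d_{\mathrm R}(\mathbf x,\mathbf c)$. An $(n,k)$ linear code is a $k$-dimensional $\mathrm{GF}(q^m)$-subspace of $\mathrm{GF}(q^m)^n$. $\sigma(q)=\frac{1}{\ln q}\sum_{k=1}^\infty\frac{1}{k(q^k-1)}$. *)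

theory Defs
  imports "HOL-Analysis.Analysis"
begin

text \<open>A subfield K of a field of type 'a (here: GF(q) inside GF(q^m)).\<close>
definition is_subfield :: "'a::field set \<Rightarrow> bool" where
  "is_subfield K \<longleftrightarrow> 0 \<in> K \<and> 1 \<in> K \<and>
     (\<forall>x\<in>K. \<forall>y\<in>K. x + y \<in> K \<and> x * y \<in> K) \<and>
     (\<forall>x\<in>K. - x \<in> K \<and> inverse x \<in> K)"

definition lin_indep_over :: "'a::field set \<Rightarrow> ('i \<Rightarrow> 'a) \<Rightarrow> 'i set \<Rightarrow> bool" where
  "lin_indep_over K f S \<longleftrightarrow>
     (\<forall>c. (\<forall>i\<in>S. c i \<in> K) \<and> (\<Sum>i\<in>S. c i * f i) = 0 \<longrightarrow> (\<forall>i\<in>S. c i = 0))"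

definition rk :: "'a::field set \<Rightarrow> 'a ^ 'n \<Rightarrow> nat" where
  "rk K x = Max (card ` {S :: 'n set. lin_indep_over K (\<lambda>i. x $ i) S})"

definition rank_covering_radius :: "'a::field set \<Rightarrow> ('a ^ 'n) set \<Rightarrow> nat" where
  "rank_covering_radius K C = Max ((\<lambda>x. Min ((\<lambda>c. rk K (x - c)) ` C)) ` UNIV)"

definition sigma :: "nat \<Rightarrow> real" where
  "sigma q = (1 / ln (real q)) * (\<Sum>k. 1 / (real (Suc k) * (real q ^ Suc k - 1)))"

end

theory Submission
  imports Defs
begin

lemma geo_bound:
  fixes t :: real
  assumes "0 < t" "t < 1"
  shows "(\<Sum>j\<in>{1..r}. t ^ j) < t / (1 - t)"
proof -
  have "(1 - t) * (\<Sum>j\<in>{1..r}. t ^ j) = t - t ^ Suc r"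
  proof (induction r)
    case 0 then show ?case by simp
  next
    case (Suc r)
    have "(\<Sum>j\<in>{1..Suc r}. t ^ j) = (\<Sum>j\<in>{1..r}. t ^ j) + t ^ Suc r"
      by simp
    then have "(1 - t) * (\<Sum>j\<in>{1..Suc r}. t ^ j) = (1-t) * (\<Sum>j\<in>{1..r}. t ^ j) + (1-t)* t^Suc r"
      by (simp add: distrib_left)
    also have "\<dots> = t - t^Suc r + (1-t)*t^Suc r" using Suc.IH by simp
    also have "\<dots> = t - t^Suc (Suc r)" by (simp add: algebra_simps)
    finally show ?case .
  qed
  moreover have "t ^ Suc r > 0" using assms by simp
  ultimately have "(1 - t) * (\<Sum>j\<in>{1..r}. t ^ j) < t" by linarith
  then show ?thesis using assms by (simp add: field_simps)
qed

lemma prod_sigma_bound: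
  fixes q :: real
  assumes q: "q \<ge> 2"
  shows "(\<Prod>j\<in>{1..r}. 1 / (1 - (1/q) ^ j)) < exp (\<Sum>k. 1 / (real (Suc k) * (q ^ Suc k - 1)))"
proof -
  define a where "a j n = ((1/q)^j)^n / real n" for j n :: nat
  define b where "b n = 1 / (real n * (q ^ n - 1))" for n :: nat
  have lnj: "(a j) sums (- ln (1 - (1/q)^j))" if "j \<ge> 1" for j
  proof -
    have "(1/q)^j \<le> 1/q" using power_decreasing[of 1 j "1/q"] q that by simp
    moreover have "1/q < 1" "0 < (1/q)^j" using q by auto
    ultimately have "\<bar>- ((1/q)^j)\<bar> < 1" by simp
    from ln_series'[OF this] have "(\<lambda>n. - ((-(-((1/q)^j)))^n) / of_nat n) sums ln (1 + - ((1/q)^j))" .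
    then have "(\<lambda>n. - a j n) sums ln (1 - (1/q)^j)" by (simp add: a_def)
    from sums_minus[OF this] show ?thesis by simp
  qed
  have A: "(\<lambda>n. \<Sum>j\<in>{1..r}. a j n) sums (\<Sum>j\<in>{1..r}. - ln (1 - (1/q)^j))"
    by (rule sums_sum) (use lnj in auto)
  have bsum: "summable b"
  proof (rule summable_comparison_test)
    show "\<exists>N. \<forall>n\<ge>N. norm (b n) \<le> 2 * (1/q)^n"
    proof (intro exI allI impI)
      fix n :: nat assume "1 \<le> n"
      have "q ^ n \<ge> q" using q \<open>1 \<le> n\<close> by (simp add: power_increasing[of 1 n q, simplified])
      then have qn: "q ^ n \<ge> 2" using q by linarith
      have "b n = 1 / (real n * (q ^ n - 1))" by (simp add: b_def)
      also have "\<dots> \<le> 1 / (q ^ n - 1)"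
        using qn \<open>1 \<le> n\<close> by (intro divide_left_mono) (auto intro: mult_pos_pos)
      also have "\<dots> \<le> 2 * (1/q)^n" using qn q by (simp add: field_simps power_divide)
      finally show "norm (b n) \<le> 2 * (1/q)^n" using qn by (simp add: b_def)
    qed
    show "summable (\<lambda>n. 2 * (1/q)^n)" using q by (intro summable_mult summable_geometric) auto
  qed
  have termlt: "(\<Sum>j\<in>{1..r}. a j n) < b n" if "n \<ge> 1" for n
  proof -
    define t where "t = (1/q)^n"
    have t0: "0 < t" "t < 1" using q that by (auto simp: t_def power_less_one_iff)
    have "(\<Sum>j\<in>{1..r}. a j n) = (\<Sum>j\<in>{1..r}. t ^ j) / real n"
      by (simp add: a_def t_def sum_divide_distrib power_mult[symmetric] mult.commute)
    also have "\<dots> < (t / (1 - t)) / real n"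
      using geo_bound[OF t0, of r] that by (intro divide_strict_right_mono) auto
    also have "t / (1 - t) = 1 / (q ^ n - 1)"
      using q t0 by (simp add: t_def field_simps power_divide)
    finally show ?thesis by (simp only: b_def divide_divide_eq_left mult.commute)
  qed
  have b0: "b 0 = 0" "(\<Sum>j\<in>{1..r}. a j 0) = 0" by (auto simp: b_def a_def)
  have D: "(\<lambda>n. b n - (\<Sum>j\<in>{1..r}. a j n)) sums (suminf b - (\<Sum>j\<in>{1..r}. - ln (1 - (1/q)^j)))"
    by (intro sums_diff A summable_sums bsum)
  have "0 < suminf b - (\<Sum>j\<in>{1..r}. - ln (1 - (1/q)^j))"
  proof -
    have "0 < (\<Sum>n. b n - (\<Sum>j\<in>{1..r}. a j n))"
    proof (rule suminf_pos2[where i=1])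
      show "summable (\<lambda>n. b n - (\<Sum>j\<in>{1..r}. a j n))" using D by (rule sums_summable)
      show "0 \<le> b n - (\<Sum>j\<in>{1..r}. a j n)" for n
        using termlt[of n] b0 by (cases "n = 0") auto
      show "0 < b 1 - (\<Sum>j\<in>{1..r}. a j 1)" using termlt[of 1] by simp
    qed
    then show ?thesis using sums_unique[OF D] by linarith
  qed
  moreover have "suminf b = (\<Sum>k. 1 / (real (Suc k) * (q ^ Suc k - 1)))"
  proof -
    have "(\<lambda>n. b (Suc n)) sums suminf b" using bsum b0(1)
      by (simp add: sums_Suc_iff summable_sums)
    then show ?thesis by (simp add: b_def sums_iff)
  qed
  moreover have "ln (\<Prod>j\<in>{1..r}. 1 / (1 - (1/q) ^ j)) = (\<Sum>j\<in>{1..r}. - ln (1 - (1/q)^j))"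
  proof -
    have pos: "0 < 1 - (1/q)^j" if "j \<ge> 1" for j
      using q that by (simp add: power_less_one_iff)
    have "ln (\<Prod>j\<in>{1..r}. 1 / (1 - (1/q) ^ j)) = (\<Sum>j\<in>{1..r}. ln (1 / (1 - (1/q) ^ j)))"
    proof (rule ln_prod)
      fix j assume "j \<in> {1..r}"
      then have "0 < 1 - (1/q)^j" using pos by simp
      then show "1 / (1 - (1/q) ^ j) \<noteq> 0" by simp
    qed simp
    also have "\<dots> = (\<Sum>j\<in>{1..r}. - ln (1 - (1/q)^j))"
      by (rule sum.cong) (use pos in \<open>auto simp: ln_div\<close>)
    finally show ?thesis .
  qed
  moreover have "0 < (\<Prod>j\<in>{1..r}. 1 / (1 - (1/q) ^ j))"
    using q by (intro prod_pos) (auto simp: power_less_one_iff)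
  ultimately have "ln (\<Prod>j\<in>{1..r}. 1 / (1 - (1/q) ^ j)) < (\<Sum>k. 1 / (real (Suc k) * (q ^ Suc k - 1)))"
    "0 < (\<Prod>j\<in>{1..r}. 1 / (1 - (1/q) ^ j))" by linarith+
  then show ?thesis using exp_less_mono[of "ln (\<Prod>j\<in>{1..r}. 1 / (1 - (1/q) ^ j))"] by simp
qed

definition spanK :: "'a::field set \<Rightarrow> (nat \<Rightarrow> 'a) \<Rightarrow> nat \<Rightarrow> 'a set" where
  "spanK K b r = (\<lambda>c. \<Sum>i<r. c i * b i) ` {c. \<forall>i<r. c i \<in> K}"

definition ksub :: "'a::field set \<Rightarrow> 'a set \<Rightarrow> bool" where
  "ksub K U \<longleftrightarrow> 0 \<in> U \<and> (\<forall>x\<in>U. \<forall>y\<in>U. x + y \<in> U) \<and> (\<forall>a\<in>K. \<forall>x\<in>U. a * x \<in> U)"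

lemma sf_basic:
  assumes "is_subfield K"
  shows "0 \<in> K" "1 \<in> K" "x \<in> K \<Longrightarrow> y \<in> K \<Longrightarrow> x + y \<in> K" "x \<in> K \<Longrightarrow> y \<in> K \<Longrightarrow> x * y \<in> K"
    "x \<in> K \<Longrightarrow> - x \<in> K" "x \<in> K \<Longrightarrow> inverse x \<in> K" "x \<in> K \<Longrightarrow> y \<in> K \<Longrightarrow> x - y \<in> K"
proof -
  have h: "0 \<in> K" "1 \<in> K" "\<And>x y. x \<in> K \<Longrightarrow> y \<in> K \<Longrightarrow> x + y \<in> K"
    "\<And>x y. x \<in> K \<Longrightarrow> y \<in> K \<Longrightarrow> x * y \<in> K" "\<And>x. x \<in> K \<Longrightarrow> - x \<in> K"
    "\<And>x. x \<in> K \<Longrightarrow> inverse x \<in> K"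
    using assms unfolding is_subfield_def by blast+
  show "0 \<in> K" "1 \<in> K" by (fact h(1), fact h(2))
  show "x \<in> K \<Longrightarrow> y \<in> K \<Longrightarrow> x + y \<in> K" by (fact h(3))
  show "x \<in> K \<Longrightarrow> y \<in> K \<Longrightarrow> x * y \<in> K" by (fact h(4))
  show "x \<in> K \<Longrightarrow> - x \<in> K" by (fact h(5))
  show "x \<in> K \<Longrightarrow> inverse x \<in> K" by (fact h(6))
  show "x \<in> K \<Longrightarrow> y \<in> K \<Longrightarrow> x - y \<in> K"
    using h(3)[of x "- y"] h(5)[of y] by simp
qed

lemma solve_lin:
  fixes a v X :: "'a::field"
  assumes "a \<noteq> 0" "a * v = - X"
  shows "v = - inverse a * X"
proof -
  have "v = inverse a * (a * v)" using assms(1) by (simp add: mult.assoc[symmetric])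
  also have "\<dots> = - inverse a * X" using assms(2) by simp
  finally show ?thesis .
qed

lemma ksub_sum:
  assumes "ksub K U" "\<And>i. i \<in> A \<Longrightarrow> f i \<in> U"
  shows "sum f A \<in> U"
  using assms(2)
proof (induction A rule: infinite_finite_induct)
  case (infinite A) then show ?case using assms(1) by (simp add: ksub_def)
next
  case empty then show ?case using assms(1) by (simp add: ksub_def)
next
  case (insert x F) then show ?case using assms(1) by (simp add: ksub_def)
qed

lemma span_sub:
  assumes "ksub K U" "\<And>i. i < r \<Longrightarrow> b i \<in> U"
  shows "spanK K b r \<subseteq> U"
  unfolding spanK_def using assms
  by (auto intro!: ksub_sum simp: ksub_def)

lemma ksub_span:
  assumes "is_subfield K"
  shows "ksub K (spanK K b r)"
  unfolding ksub_def
proof (intro conjI ballI)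
  show "0 \<in> spanK K b r" unfolding spanK_def
    by (rule image_eqI[of _ _ "\<lambda>_. 0"]) (auto simp: sf_basic[OF assms])
next
  fix x y assume "x \<in> spanK K b r" "y \<in> spanK K b r"
  then obtain c d where "\<forall>i<r. c i \<in> K" "\<forall>i<r. d i \<in> K" "x = (\<Sum>i<r. c i * b i)" "y = (\<Sum>i<r. d i * b i)"
    unfolding spanK_def by auto
  then show "x + y \<in> spanK K b r" unfolding spanK_def
    by (intro image_eqI[of _ _ "\<lambda>i. c i + d i"]) (auto simp: sf_basic[OF assms] sum.distrib distrib_right)
next
  fix a x assume "a \<in> K" "x \<in> spanK K b r"
  then obtain c where "\<forall>i<r. c i \<in> K" "x = (\<Sum>i<r. c i * b i)"
    unfolding spanK_def by auto
  then show "a * x \<in> spanK K b r" unfolding spanK_def using \<open>a \<in> K\<close>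
    by (intro image_eqI[of _ _ "\<lambda>i. a * c i"]) (auto simp: sf_basic[OF assms] sum_distrib_left mult.assoc)
qed

lemma base_in_span:
  assumes "is_subfield K" "i < r"
  shows "b i \<in> spanK K b r"
  unfolding spanK_def
proof (rule image_eqI[of _ _ "\<lambda>j. if j = i then 1 else 0"])
  have "(\<Sum>j<r. (if j = i then 1 else 0) * b j) = (\<Sum>j<r. if j = i then b j else 0)"
    by (rule sum.cong) auto
  then show "b i = (\<Sum>j<r. (if j = i then 1 else 0) * b j)"
    using assms(2) by simp
qed (auto simp: sf_basic[OF assms(1)])

lemma span_cong:
  assumes "\<And>i. i < r \<Longrightarrow> b i = b' i"
  shows "spanK K b r = spanK K b' r"
  unfolding spanK_def using assms by (auto intro!: image_cong sum.cong)

lemma indep_cong: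
  assumes "\<And>i. i < r \<Longrightarrow> b i = b' i"
  shows "lin_indep_over K b {..<r} = lin_indep_over K b' {..<r}"
proof -
  have "\<And>c. (\<Sum>i<r. c i * b i) = (\<Sum>i<r. c i * b' i)" by (rule sum.cong) (auto simp: assms)
  then show ?thesis unfolding lin_indep_over_def by simp
qed

lemma indep_sub:
  assumes "is_subfield K" "lin_indep_over K f S" "T \<subseteq> S" "finite S"
  shows "lin_indep_over K f T"
  unfolding lin_indep_over_def
proof (intro allI impI ballI)
  fix c i assume c: "(\<forall>i\<in>T. c i \<in> K) \<and> (\<Sum>i\<in>T. c i * f i) = 0" and i: "i \<in> T"
  define c' where "c' j = (if j \<in> T then c j else 0)" for j
  have "(\<Sum>j\<in>S. c' j * f j) = (\<Sum>j\<in>S. if j \<in> T then c j * f j else 0)"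
    unfolding c'_def by (rule sum.cong) auto
  also have "\<dots> = (\<Sum>j\<in>S \<inter> T. c j * f j)"
    by (simp add: sum.inter_restrict[OF assms(4)])
  also have "S \<inter> T = T" using assms(3) by auto
  finally have "(\<Sum>j\<in>S. c' j * f j) = 0" using c by simp
  moreover have "\<forall>j\<in>S. c' j \<in> K" using c sf_basic[OF assms(1)] by (auto simp: c'_def)
  ultimately have "\<forall>j\<in>S. c' j = 0" using assms(2) unfolding lin_indep_over_def by blast
  moreover have "i \<in> S" using i assms(3) by blast
  ultimately have "c' i = 0" by blast
  then show "c i = 0" using i by (simp add: c'_def)
qed

lemma card_span:
  fixes b :: "nat \<Rightarrow> 'a::{field,finite}"
  assumes "is_subfield K" "lin_indep_over K b {..<r}"
  shows "card (spanK K b r) = card K ^ r"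
proof -
  have eq: "spanK K b r = (\<lambda>c. \<Sum>i<r. c i * b i) ` (PiE {..<r} (\<lambda>_. K))"
    unfolding spanK_def
  proof (intro equalityI subsetI)
    fix y assume "y \<in> (\<lambda>c. \<Sum>i<r. c i * b i) ` {c. \<forall>i<r. c i \<in> K}"
    then obtain c where c: "\<forall>i<r. c i \<in> K" "y = (\<Sum>i<r. c i * b i)" by auto
    show "y \<in> (\<lambda>c. \<Sum>i<r. c i * b i) ` (PiE {..<r} (\<lambda>_. K))"
      by (rule image_eqI[of _ _ "restrict c {..<r}"]) (use c in auto)
  qed (auto simp: PiE_def Pi_def)
  have inj: "inj_on (\<lambda>c. \<Sum>i<r. c i * b i) (PiE {..<r} (\<lambda>_. K))"
  proof (rule inj_onI)
    fix c d assume c: "c \<in> PiE {..<r} (\<lambda>_. K)" and d: "d \<in> PiE {..<r} (\<lambda>_. K)"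
      and eq: "(\<Sum>i<r. c i * b i) = (\<Sum>i<r. d i * b i)"
    have "(\<Sum>i<r. (c i - d i) * b i) = 0"
      using eq by (simp add: left_diff_distrib sum_subtractf)
    moreover have "\<forall>i\<in>{..<r}. c i - d i \<in> K" using c d sf_basic(7)[OF assms(1)] by (auto simp: PiE_iff)
    ultimately have "\<forall>i\<in>{..<r}. c i - d i = 0"
      using spec[OF assms(2)[unfolded lin_indep_over_def], of "\<lambda>i. c i - d i"] by simp
    then show "c = d" using c d by (intro PiE_ext) auto
  qed
  have "card (spanK K b r) = card (PiE {..<r} (\<lambda>_. K))"
    unfolding eq by (rule card_image[OF inj])
  also have "\<dots> = card K ^ r" by (simp add: card_PiE)
  finally show ?thesis .
qed

lemma indep_extend:
  assumes "is_subfield K" "lin_indep_over K b {..<r}" "v \<notin> spanK K b r"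
  shows "lin_indep_over K (b(r := v)) {..<Suc r}"
  unfolding lin_indep_over_def
proof (intro allI impI)
  fix c assume c: "(\<forall>i\<in>{..<Suc r}. c i \<in> K) \<and> (\<Sum>i\<in>{..<Suc r}. c i * (b(r := v)) i) = 0"
  have s0: "(\<Sum>i<r. c i * (b(r := v)) i) = (\<Sum>i<r. c i * b i)" by (rule sum.cong) auto
  have s: "(\<Sum>i\<in>{..<Suc r}. c i * (b(r := v)) i) = (\<Sum>i<r. c i * b i) + c r * v"
    using s0 by simp
  have cr: "c r = 0"
  proof (rule ccontr)
    assume nz: "c r \<noteq> 0"
    have "v = (\<Sum>i<r. (- inverse (c r) * c i) * b i)"
    proof -
      have "(\<Sum>i<r. c i * b i) + c r * v = 0" using c s by simp
      then have "c r * v = - (\<Sum>i<r. c i * b i)" by (simp add: eq_neg_iff_add_eq_0 add.commute)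
      then have "v = - inverse (c r) * (\<Sum>i<r. c i * b i)" using nz
        by (intro solve_lin)
      then show ?thesis by (simp add: sum_distrib_left mult.assoc)
    qed
    moreover have "\<forall>i<r. - inverse (c r) * c i \<in> K" using c sf_basic[OF assms(1)] by auto
    ultimately have "v \<in> spanK K b r" unfolding spanK_def
      by (intro image_eqI[of _ _ "\<lambda>i. - inverse (c r) * c i"]) auto
    then show False using assms(3) by simp
  qed
  then have "(\<Sum>i<r. c i * b i) = 0" using c s by simp
  moreover have "\<forall>i\<in>{..<r}. c i \<in> K" using c by auto
  ultimately have "\<forall>i\<in>{..<r}. c i = 0" using assms(2) unfolding lin_indep_over_def by blast
  then show "\<forall>i\<in>{..<Suc r}. c i = 0" using cr less_Suc_eq by auto
qed

lemma dep_if_in_span: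
  assumes "is_subfield K" "v \<in> spanK K b r"
  shows "\<not> lin_indep_over K (b(r := v)) {..<Suc r}"
proof
  assume ind: "lin_indep_over K (b(r := v)) {..<Suc r}"
  obtain c where c: "\<forall>i<r. c i \<in> K" "v = (\<Sum>i<r. c i * b i)" using assms(2) unfolding spanK_def by auto
  define d where "d i = (if i = r then -1 else c i)" for i
  have s0: "(\<Sum>i<r. d i * (b(r := v)) i) = (\<Sum>i<r. c i * b i)" by (rule sum.cong) (auto simp: d_def)
  have "(\<Sum>i\<in>{..<Suc r}. d i * (b(r := v)) i) = (\<Sum>i<r. c i * b i) - v"
    using s0 by (simp add: d_def)
  also have "\<dots> = 0" using c by simp
  finally have "(\<Sum>i\<in>{..<Suc r}. d i * (b(r := v)) i) = 0" .
  moreover have "\<forall>i\<in>{..<Suc r}. d i \<in> K" using c sf_basic[OF assms(1)] by (auto simp: d_def)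
  ultimately have "d r = 0" using ind unfolding lin_indep_over_def by blast
  then show False by (simp add: d_def)
qed

lemma ksub_UNIV: "ksub K UNIV" by (simp add: ksub_def)

lemma count_indep:
  fixes U :: "'a::{field,finite} set"
  assumes K: "is_subfield K" and U: "ksub K U"
  shows "card {b \<in> PiE {..<r} (\<lambda>_. U). lin_indep_over K b {..<r}} = (\<Prod>i<r. (card U - card K ^ i))"
proof (induction r)
  case 0
  have "{b \<in> PiE {..<0::nat} (\<lambda>_. U). lin_indep_over K b {..<0}} = {\<lambda>_. undefined}"
    by (simp add: lin_indep_over_def)
  then show ?case by simp
next
  case (Suc r)
  define I where "I r = {b \<in> PiE {..<r} (\<lambda>_. U). lin_indep_over K b {..<r}}" for r :: nat
  have finI: "finite (I r')" for r'
    by (rule finite_subset[of _ "PiE {..<r'} (\<lambda>_. U)"]) (auto simp: I_def intro: finite_PiE)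
  have spanU: "spanK K b r \<subseteq> U" if "b \<in> I r" for b
    using that by (intro span_sub[OF U]) (auto simp: I_def PiE_iff)
  have eq: "I (Suc r) = (\<lambda>(b, v). b(r := v)) ` (SIGMA b:I r. U - spanK K b r)"
  proof (intro equalityI subsetI)
    fix b' assume b': "b' \<in> I (Suc r)"
    define b where "b = b'(r := undefined)"
    have bb: "b(r := b' r) = b'" by (simp add: b_def)
    have b'Pi: "b' \<in> PiE {..<Suc r} (\<lambda>_. U)" and b'ind: "lin_indep_over K b' {..<Suc r}"
      using b' by (simp_all add: I_def)
    have "b \<in> PiE {..<r} (\<lambda>_. U)"
    proof (rule PiE_I)
      fix x assume "x \<in> {..<r}"
      then show "b x \<in> U" using PiE_mem[OF b'Pi, of x] by (simp add: b_def)
    next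
      fix x assume "x \<notin> {..<r}"
      then show "b x = undefined" using PiE_arb[OF b'Pi, of x] by (cases "x = r") (auto simp: b_def)
    qed
    moreover have "lin_indep_over K b {..<r}"
    proof -
      have "lin_indep_over K b' {..<r}"
        by (rule indep_sub[OF K b'ind]) auto
      then show ?thesis by (subst indep_cong[of r b b']) (auto simp: b_def)
    qed
    moreover have "b' r \<in> U" using b' by (auto simp: I_def PiE_iff)
    moreover have "b' r \<notin> spanK K b r"
      using dep_if_in_span[OF K, of "b' r" b r] b'ind bb by auto
    ultimately show "b' \<in> (\<lambda>(b, v). b(r := v)) ` (SIGMA b:I r. U - spanK K b r)"
      by (intro image_eqI[of _ _ "(b, b' r)"]) (simp_all add: bb I_def)
  next
    fix y assume "y \<in> (\<lambda>(b, v). b(r := v)) ` (SIGMA b:I r. U - spanK K b r)"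
    then obtain b v where bv: "b \<in> I r" "v \<in> U" "v \<notin> spanK K b r" "y = b(r := v)" by auto
    have "y \<in> PiE {..<Suc r} (\<lambda>_. U)"
      using bv by (auto simp: I_def lessThan_Suc intro!: PiE_fun_upd)
    moreover have "lin_indep_over K y {..<Suc r}"
      using indep_extend[OF K, of b r v] bv by (auto simp: I_def)
    ultimately show "y \<in> I (Suc r)" by (simp add: I_def)
  qed
  have inj: "inj_on (\<lambda>(b, v). b(r := v)) (SIGMA b:I r. U - spanK K b r)"
  proof (rule inj_onI)
    fix x y assume hx: "x \<in> (SIGMA b:I r. U - spanK K b r)" and hy: "y \<in> (SIGMA b:I r. U - spanK K b r)"
      and e: "(\<lambda>(b, v). b(r := v)) x = (\<lambda>(b, v). b(r := v)) y"
    obtain b v where x: "x = (b, v)" by (cases x)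
    obtain b' v' where y: "y = (b', v')" by (cases y)
    have h1: "b \<in> PiE {..<r} (\<lambda>_. U)" using hx x by (simp add: I_def)
    have h2: "b' \<in> PiE {..<r} (\<lambda>_. U)" using hy y by (simp add: I_def)
    have h3: "b(r := v) = b'(r := v')" using e x y by simp
    have "v = v'" using fun_cong[OF h3, of r] by simp
    moreover have "b = b'"
    proof
      fix i show "b i = b' i"
      proof (cases "i = r")
        case True
        then show ?thesis using PiE_arb[OF h1, of r] PiE_arb[OF h2, of r] by simp
      next
        case False then show ?thesis using fun_cong[OF h3, of i] by simp
      qed
    qed
    ultimately show "x = y" using x y by simp
  qed
  have "card (I (Suc r)) = card (SIGMA b:I r. U - spanK K b r)"
    unfolding eq by (rule card_image[OF inj])
  also have "\<dots> = (\<Sum>b\<in>I r. card (U - spanK K b r))" by (rule card_SigmaI) (simp_all add: finI)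
  also have "\<dots> = (\<Sum>b\<in>I r. card U - card K ^ r)"
  proof (rule sum.cong)
    fix b assume "b \<in> I r"
    then show "card (U - spanK K b r) = card U - card K ^ r"
      using spanU card_span[OF K, of b r] by (simp add: card_Diff_subset I_def)
  qed simp
  also have "\<dots> = card (I r) * (card U - card K ^ r)" by simp
  finally show ?case using Suc by (simp add: I_def)
qed

lemma rk_witness:
  fixes x :: "'a::field ^ 'n"
  shows "\<exists>S. lin_indep_over K (($) x) S \<and> card S = rk K x \<and>
             (\<forall>j. j \<notin> S \<longrightarrow> \<not> lin_indep_over K (($) x) (insert j S))"
proof -
  define M where "M = card ` {S. lin_indep_over K (($) x) S}"
  have fin: "finite M" unfolding M_def by simp
  have e: "lin_indep_over K (($) x) {}" by (simp add: lin_indep_over_def)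
  have ne: "M \<noteq> {}" unfolding M_def using e by blast
  have rk: "rk K x = Max M" by (simp add: rk_def M_def)
  obtain S where S: "lin_indep_over K (($) x) S" "card S = Max M"
    using Max_in[OF fin ne] unfolding M_def by auto
  have "\<not> lin_indep_over K (($) x) (insert j S)" if "j \<notin> S" for j
  proof
    assume "lin_indep_over K (($) x) (insert j S)"
    then have "card (insert j S) \<in> M" unfolding M_def by auto
    then have "card (insert j S) \<le> Max M" using fin by simp
    then show False using S that by simp
  qed
  then show ?thesis using S rk by auto
qed

lemma rk_le_support:
  fixes x :: "'a::field ^ 'n"
  assumes K: "is_subfield K"
  shows "rk K x \<le> card {i. x $ i \<noteq> 0}"
  unfolding rk_def
proof (subst Max_le_iff)
  have e: "lin_indep_over K (($) x) {}" by (simp add: lin_indep_over_def)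
  show "card ` {S. lin_indep_over K (($) x) S} \<noteq> {}" using e by blast
  show "finite (card ` {S. lin_indep_over K (($) x) S})" by simp
  show "\<forall>a\<in>card ` {S. lin_indep_over K (($) x) S}. a \<le> card {i. x $ i \<noteq> 0}"
  proof clarify
  fix S assume S: "lin_indep_over K (($) x) S"
  have "S \<subseteq> {i. x $ i \<noteq> 0}"
  proof
    fix i assume i: "i \<in> S"
    show "i \<in> {i. x $ i \<noteq> 0}"
    proof (rule ccontr)
      assume "i \<notin> {i. x $ i \<noteq> 0}"
      then have x0: "x $ i = 0" by simp
      define c where "c j = (if j = i then 1 else (0::'a))" for j :: 'n
      have "(\<Sum>j\<in>S. c j * x $ j) = (\<Sum>j\<in>S. if j = i then x $ j else 0)"
        by (rule sum.cong) (auto simp: c_def)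
      also have "\<dots> = 0" using x0 by simp
      finally have s0: "(\<Sum>j\<in>S. c j * x $ j) = 0" .
      have cK: "\<forall>j\<in>S. c j \<in> K" using sf_basic(1,2)[OF K] by (simp add: c_def)
      have "\<forall>j\<in>S. c j = 0"
        using spec[OF S[unfolded lin_indep_over_def], of c] s0 cK by blast
      then show False using i by (auto simp: c_def)
    qed
  qed
  then show "card S \<le> card {i. x $ i \<noteq> 0}" by (intro card_mono) auto
  qed
qed

lemma in_span_of_max:
  assumes K: "is_subfield K" and ind: "lin_indep_over K f S" and fin: "finite S"
    and j: "j \<notin> S" and dep: "\<not> lin_indep_over K f (insert j S)"
  shows "\<exists>d. (\<forall>s\<in>S. d s \<in> K) \<and> f j = (\<Sum>s\<in>S. d s * f s)"
proof -
  obtain c where c: "\<forall>i\<in>insert j S. c i \<in> K" "(\<Sum>i\<in>insert j S. c i * f i) = 0"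
    and nz: "\<exists>i\<in>insert j S. c i \<noteq> 0"
    using dep unfolding lin_indep_over_def by blast
  have s: "c j * f j + (\<Sum>i\<in>S. c i * f i) = 0" using c fin j by simp
  have cj: "c j \<noteq> 0"
  proof
    assume "c j = 0"
    then have "(\<Sum>i\<in>S. c i * f i) = 0" using s by simp
    then have "\<forall>i\<in>S. c i = 0" using spec[OF ind[unfolded lin_indep_over_def], of c] c(1) by simp
    then show False using nz \<open>c j = 0\<close> by auto
  qed
  have "f j = - inverse (c j) * (\<Sum>i\<in>S. c i * f i)"
  proof -
    have "c j * f j = - (\<Sum>i\<in>S. c i * f i)" using s by (simp add: eq_neg_iff_add_eq_0)
    then show ?thesis using cj
      by (intro solve_lin)
  qed
  also have "\<dots> = (\<Sum>s\<in>S. (- inverse (c j) * c s) * f s)"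
    by (simp add: sum_distrib_left mult.assoc)
  finally show ?thesis using c(1) sf_basic[OF K]
    by (intro exI[of _ "\<lambda>s. - inverse (c j) * c s"]) auto
qed

lemma indep_reindex:
  assumes h: "bij_betw h {..<r} S" and ind: "lin_indep_over K f S"
  shows "lin_indep_over K (f \<circ> h) {..<r}"
  unfolding lin_indep_over_def
proof (intro allI impI ballI)
  fix c i assume c: "(\<forall>i\<in>{..<r}. c i \<in> K) \<and> (\<Sum>i\<in>{..<r}. c i * (f \<circ> h) i) = 0" and i: "i \<in> {..<r}"
  define c' where "c' = c \<circ> inv_into {..<r} h"
  have inv: "inv_into {..<r} h (h j) = j" if "j < r" for j
    using h that by (simp add: bij_betw_def inv_into_f_f)
  have "(\<Sum>s\<in>S. c' s * f s) = (\<Sum>j\<in>{..<r}. c' (h j) * f (h j))"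
    by (rule sum.reindex_bij_betw[OF h, symmetric])
  also have "\<dots> = (\<Sum>j\<in>{..<r}. c j * (f \<circ> h) j)"
    by (rule sum.cong) (auto simp: c'_def inv)
  finally have "(\<Sum>s\<in>S. c' s * f s) = 0" using c by simp
  moreover have "\<forall>s\<in>S. c' s \<in> K"
  proof
    fix s assume "s \<in> S"
    then have "inv_into {..<r} h s \<in> {..<r}" using h by (auto simp: bij_betw_def intro: inv_into_into)
    then show "c' s \<in> K" using c by (simp add: c'_def)
  qed
  ultimately have "\<forall>s\<in>S. c' s = 0" using spec[OF ind[unfolded lin_indep_over_def], of c'] by blast
  then have "c' (h i) = 0" using h i by (auto simp: bij_betw_def)
  then show "c i = 0" using inv i by (simp add: c'_def)
qed

lemma span_reindex:
  assumes K: "is_subfield K" and h: "bij_betw h {..<r} S" and d: "\<forall>s\<in>S. d s \<in> K"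
  shows "(\<Sum>s\<in>S. d s * f s) \<in> spanK K (f \<circ> h) r"
proof -
  have "(\<Sum>s\<in>S. d s * f s) = (\<Sum>j\<in>{..<r}. d (h j) * f (h j))"
    by (rule sum.reindex_bij_betw[OF h, symmetric])
  moreover have "\<forall>j<r. d (h j) \<in> K" using d h by (auto simp: bij_betw_def)
  ultimately show ?thesis unfolding spanK_def
    by (intro image_eqI[of _ _ "d \<circ> h"]) auto
qed

lemma extend_indep:
  fixes b :: "nat \<Rightarrow> 'a::{field,finite}"
  assumes K: "is_subfield K" and card: "CARD('a) = card K ^ m" and q2: "card K \<ge> 2"
  shows "lin_indep_over K b {..<r} \<Longrightarrow> r \<le> p \<Longrightarrow> p \<le> m \<Longrightarrow>
    \<exists>b'. lin_indep_over K b' {..<p} \<and> spanK K b r \<subseteq> spanK K b' p"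
proof (induction p)
  case 0 then show ?case by auto
next
  case (Suc p)
  show ?case
  proof (cases "r = Suc p")
    case True then show ?thesis using Suc by auto
  next
    case False
    then obtain b' where b': "lin_indep_over K b' {..<p}" "spanK K b r \<subseteq> spanK K b' p"
      using Suc by auto
    have "card (spanK K b' p) = card K ^ p" by (rule card_span[OF K b'(1)])
    also have "\<dots> < card K ^ m" using q2 Suc.prems by (intro power_strict_increasing) auto
    finally have "spanK K b' p \<noteq> UNIV" using card by auto
    then obtain v where v: "v \<notin> spanK K b' p" by auto
    have ind: "lin_indep_over K (b'(p := v)) {..<Suc p}" by (rule indep_extend[OF K b'(1) v])
    have "spanK K b' p = spanK K (b'(p := v)) p" by (rule span_cong) auto
    also have "\<dots> \<subseteq> spanK K (b'(p := v)) (Suc p)"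
      by (intro span_sub[OF ksub_span[OF K]] base_in_span[OF K]) auto
    finally show ?thesis using ind b'(2) by blast
  qed
qed

lemma low_rank_in_span:
  fixes x :: "'a::{field,finite} ^ 'n"
  assumes K: "is_subfield K" and card: "CARD('a) = card K ^ m" and q2: "card K \<ge> 2"
    and rk: "rk K x \<le> p" and pm: "p \<le> m"
  shows "\<exists>b. lin_indep_over K b {..<p} \<and> (\<forall>j. x $ j \<in> spanK K b p)"
proof -
  obtain S where S: "lin_indep_over K (($) x) S" "card S = rk K x"
    "\<forall>j. j \<notin> S \<longrightarrow> \<not> lin_indep_over K (($) x) (insert j S)"
    using rk_witness by blast
  define r where "r = card S"
  obtain h where h: "bij_betw h {..<r} S"
    using ex_bij_betw_nat_finite[of S] by (auto simp: r_def atLeast0LessThan)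
  define b0 where "b0 = ($) x \<circ> h"
  have ind0: "lin_indep_over K b0 {..<r}" unfolding b0_def by (rule indep_reindex[OF h S(1)])
  have inspan: "x $ j \<in> spanK K b0 r" for j
  proof (cases "j \<in> S")
    case True
    then obtain i where "i < r" "h i = j" using h by (auto simp: bij_betw_def)
    then show ?thesis using base_in_span[OF K, of i r b0] by (simp add: b0_def)
  next
    case False
    obtain d where d: "\<forall>s\<in>S. d s \<in> K" "x $ j = (\<Sum>s\<in>S. d s * x $ s)"
      using in_span_of_max[OF K S(1) _ False] S(3) False by auto
    show ?thesis using span_reindex[OF K h d(1), of "($) x"] d(2) by (simp add: b0_def)
  qed
  obtain b' where "lin_indep_over K b' {..<p}" "spanK K b0 r \<subseteq> spanK K b' p"
    using extend_indep[OF K card q2 ind0, of p] rk pm S(2) by (auto simp: r_def)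
  then show ?thesis using inspan by blast
qed

lemma card_filter_sum: "finite A \<Longrightarrow> card {a\<in>A. P a} = (\<Sum>a\<in>A. if P a then 1 else 0)"
  by (simp add: sum.If_cases Int_def conj_commute)

lemma card_vec_in:
  fixes T :: "'a set"
  shows "card {x :: 'a ^ 'n. \<forall>j. x $ j \<in> T} = card T ^ CARD('n)"
proof -
  have "{x :: 'a ^ 'n. \<forall>j. x $ j \<in> T} = vec_lambda ` (PiE UNIV (\<lambda>_. T))"
  proof (intro equalityI subsetI)
    fix x :: "'a^'n" assume "x \<in> {x. \<forall>j. x $ j \<in> T}"
    then show "x \<in> vec_lambda ` (PiE UNIV (\<lambda>_. T))"
      by (intro image_eqI[of _ _ "vec_nth x"]) (auto simp: vec_nth_inverse)
  qed auto
  moreover have "inj_on vec_lambda (PiE UNIV (\<lambda>_. T) :: ('n \<Rightarrow> 'a) set)"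
    by (rule inj_onI) simp
  ultimately have "card {x :: 'a ^ 'n. \<forall>j. x $ j \<in> T} = card (PiE (UNIV::'n set) (\<lambda>_. T))"
    by (simp add: card_image)
  also have "\<dots> = card T ^ CARD('n)" by (simp add: card_PiE)
  finally show ?thesis .
qed

lemma count_low_rank:
  assumes K: "is_subfield K" and card: "CARD('a::{field,finite}) = card K ^ m" and q2: "card K \<ge> 2"
    and pm: "p \<le> m"
  shows "card {x :: 'a ^ 'n. rk K x \<le> p} * (\<Prod>i<p. (card K ^ p - card K ^ i))
         \<le> (\<Prod>i<p. (CARD('a) - card K ^ i)) * (card K ^ p) ^ CARD('n)"
proof -
  define I where "I = {b \<in> PiE {..<p} (\<lambda>_. UNIV::'a set). lin_indep_over K b {..<p}}"
  define R where "R x = {b\<in>I. \<forall>j. x $ j \<in> spanK K b p}" for x :: "'a^'n"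
  define B where "B = {x :: 'a ^ 'n. rk K x \<le> p}"
  have finI: "finite I" unfolding I_def
    by (rule finite_subset[of _ "PiE {..<p} (\<lambda>_. UNIV)"]) (auto intro: finite_PiE)
  have cI: "card I = (\<Prod>i<p. (CARD('a) - card K ^ i))"
    unfolding I_def using count_indep[OF K ksub_UNIV, of p] by simp
  have low: "(\<Prod>i<p. (card K ^ p - card K ^ i)) \<le> card (R x)" if "x \<in> B" for x
  proof -
    have rkx: "rk K x \<le> p" using that by (simp add: B_def)
    obtain a where a: "lin_indep_over K a {..<p}" "\<forall>j. x $ j \<in> spanK K a p"
      using low_rank_in_span[OF K card q2 rkx pm] by blast
    define U where "U = spanK K a p"
    have cU: "card U = card K ^ p" unfolding U_def by (rule card_span[OF K a(1)])
    have kU: "ksub K U" unfolding U_def by (rule ksub_span[OF K])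
    have "{b \<in> PiE {..<p} (\<lambda>_. U). lin_indep_over K b {..<p}} \<subseteq> R x"
    proof
      fix b assume b: "b \<in> {b \<in> PiE {..<p} (\<lambda>_. U). lin_indep_over K b {..<p}}"
      have sub: "spanK K b p \<subseteq> U"
        by (rule span_sub[OF kU]) (use b in \<open>auto simp: PiE_iff\<close>)
      have "card (spanK K b p) = card U" using b cU card_span[OF K] by auto
      then have "spanK K b p = U" using sub by (intro card_subset_eq) auto
      then show "b \<in> R x" using b a(2) by (auto simp: R_def I_def U_def PiE_iff)
    qed
    then have "card {b \<in> PiE {..<p} (\<lambda>_. U). lin_indep_over K b {..<p}} \<le> card (R x)"
      by (intro card_mono) (auto simp: R_def finI)
    then show ?thesis
      using count_indep[OF K kU, of p] by (simp add: cU)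
  qed
  have "card B * (\<Prod>i<p. (card K ^ p - card K ^ i)) = (\<Sum>x\<in>B. (\<Prod>i<p. (card K ^ p - card K ^ i)))"
    by simp
  also have "\<dots> \<le> (\<Sum>x\<in>B. card (R x))" by (rule sum_mono) (rule low)
  also have "\<dots> \<le> (\<Sum>x\<in>UNIV. card (R x))" by (rule sum_mono2) auto
  also have "\<dots> = (\<Sum>x::'a^'n\<in>UNIV. \<Sum>b\<in>I. if (\<forall>j. x $ j \<in> spanK K b p) then 1 else 0)"
    unfolding R_def by (simp add: card_filter_sum[OF finI])
  also have "\<dots> = (\<Sum>b\<in>I. \<Sum>x::'a^'n\<in>UNIV. if (\<forall>j. x $ j \<in> spanK K b p) then 1 else 0)"
    by (rule sum.swap)
  also have "\<dots> = (\<Sum>b\<in>I. card {x :: 'a^'n. \<forall>j. x $ j \<in> spanK K b p})"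
  proof -
    have cf: "\<And>P. card {x::'a^'n. P x} = (\<Sum>x\<in>UNIV. if P x then 1 else 0)"
      using card_filter_sum[of "UNIV::('a^'n) set"] by simp
    show ?thesis by (simp only: cf)
  qed
  also have "\<dots> = (\<Sum>b\<in>I. (card K ^ p) ^ CARD('n))"
    by (rule sum.cong) (auto simp: card_vec_in card_span[OF K] I_def)
  also have "\<dots> = card I * (card K ^ p) ^ CARD('n)" by simp
  finally show ?thesis by (simp add: B_def cI)
qed

lemma card_subspace:
  assumes "vec.subspace (C :: ('a::{field,finite} ^ 'n) set)"
  shows "card C = CARD('a) ^ vec.dim C"
proof -
  obtain B where B: "B \<subseteq> C" "vec.independent B" "C \<subseteq> vec.span B" "card B = vec.dim C"
    using vec.basis_exists by blast
  have finB: "finite B" by simp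
  have spanB: "vec.span B = C" using vec.span_subspace[OF B(1) B(3) assms] .
  have eq: "C = (\<lambda>u. \<Sum>v\<in>B. u v *s v) ` (PiE B (\<lambda>_. UNIV))"
  proof -
    have "C = range (\<lambda>u. \<Sum>v\<in>B. u v *s v)" using vec.span_finite[OF finB] spanB by simp
    also have "\<dots> = (\<lambda>u. \<Sum>v\<in>B. u v *s v) ` (PiE B (\<lambda>_. UNIV))"
    proof (intro equalityI subsetI)
      fix y assume "y \<in> range (\<lambda>u. \<Sum>v\<in>B. u v *s v)"
      then obtain u where "y = (\<Sum>v\<in>B. u v *s v)" by auto
      then show "y \<in> (\<lambda>u. \<Sum>v\<in>B. u v *s v) ` (PiE B (\<lambda>_. UNIV))"
        by (intro image_eqI[of _ _ "restrict u B"]) auto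
    qed auto
    finally show ?thesis .
  qed
  have inj: "inj_on (\<lambda>u. \<Sum>v\<in>B. u v *s v) (PiE B (\<lambda>_. UNIV))"
  proof (rule inj_onI)
    fix u w assume u: "u \<in> PiE B (\<lambda>_. UNIV)" and w: "w \<in> PiE B (\<lambda>_. UNIV)"
      and e: "(\<Sum>v\<in>B. u v *s v) = (\<Sum>v\<in>B. w v *s v)"
    have "(\<Sum>v\<in>B. (u v - w v) *s v) = 0"
      using e by (simp add: vec.scale_left_diff_distrib sum_subtractf)
    then have "\<forall>v\<in>B. u v - w v = 0"
      using spec[OF conjunct2[OF B(2)[unfolded vec.independent_explicit]], of "\<lambda>v. u v - w v"] by simp
    then show "u = w" using u w by (intro PiE_ext) auto
  qed
  have "card C = card (PiE B (\<lambda>_. UNIV :: 'a set))" unfolding eq by (rule card_image[OF inj])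
  also have "\<dots> = CARD('a) ^ card B" by (simp add: card_PiE)
  finally show ?thesis using B(4) by simp
qed

lemma hamming_cover:
  fixes C :: "('a::{field,finite} ^ 'n) set"
  assumes "vec.subspace C"
  shows "\<exists>c\<in>C. card {i. (x - c) $ i \<noteq> 0} \<le> CARD('n) - vec.dim C"
proof -
  obtain S where S: "S \<subseteq> C" "vec.independent S" "C \<subseteq> vec.span S" "card S = vec.dim C"
    using vec.basis_exists by blast
  have spanS: "vec.span S = C" using vec.span_subspace[OF S(1) S(3) assms] .
  obtain Bx where Bx: "S \<subseteq> Bx" "Bx \<subseteq> S \<union> cart_basis" "vec.independent Bx" "S \<union> cart_basis \<subseteq> vec.span Bx"
    using vec.maximal_independent_subset_extend[of S "S \<union> cart_basis"] S(2) by blast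
  have "UNIV = vec.span (cart_basis :: ('a^'n) set)" by simp
  also have "\<dots> \<subseteq> vec.span Bx" using Bx(4) by (intro vec.span_minimal) auto
  finally have spanBx: "vec.span Bx = UNIV" by auto
  have cBx: "card Bx = CARD('n)"
    using vec.basis_card_eq_dim[of Bx UNIV] Bx(3) spanBx by (simp add: card_cart_basis)
  define T where "T = Bx - S"
  have cT: "card T = CARD('n) - vec.dim C"
    using cBx S(4) Bx(1) by (simp add: T_def card_Diff_subset)
  have BST: "Bx = S \<union> T" using Bx(1) by (auto simp: T_def)
  have "x \<in> vec.span (S \<union> T)" using spanBx BST by simp
  then obtain c t where ct: "x = c + t" "c \<in> vec.span S" "t \<in> vec.span T"
    unfolding vec.span_Un by blast
  define I where "I = {i. axis i 1 \<in> T}"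
  define W where "W = {y :: 'a^'n. \<forall>i. i \<notin> I \<longrightarrow> y $ i = 0}"
  have "vec.subspace W" unfolding vec.subspace_def W_def by auto
  moreover have "T \<subseteq> W"
  proof
    fix y assume y: "y \<in> T"
    then have "y \<in> cart_basis" using Bx(2) by (auto simp: T_def)
    then obtain i where i: "y = axis i 1" by (auto simp: cart_basis_def)
    then have "i \<in> I" using y by (simp add: I_def)
    then show "y \<in> W" using i by (auto simp: W_def axis_def)
  qed
  ultimately have "vec.span T \<subseteq> W" by (rule vec.span_minimal[rotated])
  then have tW: "t \<in> W" using ct by auto
  have "card I \<le> card T"
    by (rule card_inj_on_le[of "\<lambda>i. axis i 1"]) (auto simp: I_def inj_on_def axis_eq_axis)
  moreover have "card {i. t $ i \<noteq> 0} \<le> card I"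
    using tW by (intro card_mono) (auto simp: W_def)
  ultimately show ?thesis using ct spanS cT by (intro bexI[of _ c]) auto
qed

lemma ratio_term:
  fixes Q :: real
  assumes Q: "Q \<ge> 2" and i: "i < p" and pm: "p \<le> m"
  shows "(Q^m - Q^i) / (Q^p - Q^i) \<le> Q^(m-p) * (1 / (1 - (1/Q)^(p-i)))"
proof -
  have Qp: "Q^p = Q^i * Q^(p-i)" using i by (simp add: power_add[symmetric])
  have Qm: "Q^m = Q^(m-p) * Q^p" using pm by (simp add: power_add[symmetric])
  have lt: "Q^i < Q^p" using Q i by (intro power_strict_increasing) auto
  have pos: "0 < Q^i" using Q by simp
  have e1: "Q^i / Q^p = 1 / Q^(p-i)" using Qp pos i by simp
  have Qp0: "Q^p \<noteq> 0" using pos lt by linarith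
  have "1 - (1/Q)^(p-i) = Q^p / Q^p - Q^i / Q^p" using Qp0 e1 by (simp add: power_one_over)
  also have "\<dots> = (Q^p - Q^i) / Q^p" by (simp add: diff_divide_distrib)
  finally have e2: "1 - (1/Q)^(p-i) = (Q^p - Q^i) / Q^p" .
  have "Q^(m-p) * (1 / (1 - (1/Q)^(p-i))) = Q^(m-p) * (Q^p / (Q^p - Q^i))" by (simp add: e2)
  also have "\<dots> = Q^m / (Q^p - Q^i)" using Qm by simp
  finally have "Q^(m-p) * (1 / (1 - (1/Q)^(p-i))) = Q^m / (Q^p - Q^i)" .
  moreover have "(Q^m - Q^i) / (Q^p - Q^i) \<le> Q^m / (Q^p - Q^i)"
    using lt pos by (intro divide_right_mono) auto
  ultimately show ?thesis by simp
qed

lemma ratio_bound: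
  fixes Q :: real
  assumes Q: "Q \<ge> 2" and pm: "p \<le> m"
  shows "(\<Prod>i<p. (Q^m - Q^i) / (Q^p - Q^i)) \<le> Q^(p*(m-p)) * (\<Prod>j\<in>{1..p}. 1 / (1 - (1/Q)^j))"
proof -
  have "(\<Prod>i<p. (Q^m - Q^i) / (Q^p - Q^i)) \<le> (\<Prod>i<p. Q^(m-p) * (1 / (1 - (1/Q)^(p-i))))"
  proof (rule prod_mono)
    fix i assume "i \<in> {..<p}"
    then have i: "i < p" by simp
    have "Q^i < Q^p" "Q^i \<le> Q^m" using Q i pm by (auto intro: power_strict_increasing power_increasing)
    then have "0 \<le> (Q^m - Q^i) / (Q^p - Q^i)" by simp
    moreover have "(Q^m - Q^i) / (Q^p - Q^i) \<le> Q^(m-p) * (1 / (1 - (1/Q)^(p-i)))"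
      by (rule ratio_term[OF Q i pm])
    ultimately show "0 \<le> (Q^m - Q^i) / (Q^p - Q^i) \<and> (Q^m - Q^i) / (Q^p - Q^i) \<le> Q^(m-p) * (1 / (1 - (1/Q)^(p-i)))"
      by simp
  qed
  also have "\<dots> = (\<Prod>i<p. Q^(m-p)) * (\<Prod>i<p. 1 / (1 - (1/Q)^(p-i)))"
    by (rule prod.distrib)
  also have "(\<Prod>i<p. Q^(m-p)) = (Q^(m-p))^p" by simp
  also have "\<dots> = Q^(p*(m-p))" unfolding power_mult[symmetric] by (simp add: mult.commute)
  also have "(\<Prod>i<p. 1 / (1 - (1/Q)^(p-i))) = (\<Prod>j\<in>{1..p}. 1 / (1 - (1/Q)^j))"
    by (rule prod.reindex_bij_witness[of _ "\<lambda>j. p - j" "\<lambda>i. p - i"]) auto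
  finally show ?thesis .
qed

theorem proposition13:
  fixes K :: "'a::{field,finite} set" and C :: "('a ^ 'n) set"
    and q m k \<rho> :: nat
  assumes "is_subfield K" and "card K = q" and "CARD('a) = q ^ m"
    and "CARD('n) \<le> m"
    and "vec.subspace C" and "vec.dim C = k"
    and "rank_covering_radius K C = \<rho>"
    and "0 < \<rho>" and "\<rho> < CARD('n)"
  shows "\<lfloor>real CARD('n) - real \<rho> - (real \<rho> * (real CARD('n) - real \<rho>) + sigma q) / real m\<rfloor> + 1 \<le> int k
         \<and> k \<le> CARD('n) - \<rho>"
proof -
  note K = assms(1)
  define n where "n = CARD('n)"
  have q2: "q \<ge> 2"
  proof -
    have "{0, 1} \<subseteq> K" using sf_basic[OF K] by auto
    then have "card {0::'a, 1} \<le> card K" by (intro card_mono) auto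
    then show ?thesis using assms(2) by simp
  qed
  have cardA: "CARD('a) = card K ^ m" using assms(2,3) by simp
  have q2': "card K \<ge> 2" using q2 assms(2) by simp
  have m0: "m > 0" using assms(4,8,9) by simp
  have rm: "\<rho> \<le> m" using assms(4,9) by simp
  have finC: "finite C" by simp
  have C0: "0 \<in> C" using vec.subspace_0[OF assms(5)] .
  define f where "f x = Min ((\<lambda>c. rk K (x - c)) ` C)" for x :: "'a^'n"
  have rad: "Max (range f) = \<rho>" using assms(7) by (simp add: rank_covering_radius_def f_def)
  have fle: "f x \<le> rk K (x - c)" if "c \<in> C" for x c
    unfolding f_def using finC that by (intro Min_le) auto
  have part2: "f x \<le> n - k" for x
  proof -
    obtain c where c: "c \<in> C" "card {i. (x - c) $ i \<noteq> 0} \<le> n - k"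
      using hamming_cover[OF assms(5), of x] assms(6) by (auto simp: n_def)
    have "f x \<le> rk K (x - c)" by (rule fle[OF c(1)])
    also have "\<dots> \<le> card {i. (x - c) $ i \<noteq> 0}" by (rule rk_le_support[OF K])
    finally show ?thesis using c(2) by simp
  qed
  have "\<rho> \<le> n - k" unfolding rad[symmetric] using part2 by (subst Max_le_iff) auto
  then have kn: "k \<le> n - \<rho>" "k < n" using assms(8,9) by (auto simp: n_def)
  have cover: "\<exists>c\<in>C. rk K (x - c) \<le> \<rho>" for x
  proof -
    have "f x \<le> \<rho>" unfolding rad[symmetric] by (rule Max_ge) auto
    moreover have "f x \<in> (\<lambda>c. rk K (x - c)) ` C" unfolding f_def using finC C0 by (intro Min_in) auto
    ultimately show ?thesis by auto
  qed
  define Bs where "Bs = {y :: 'a^'n. rk K y \<le> \<rho>}"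
  have "UNIV \<subseteq> (\<Union>c\<in>C. (\<lambda>y. c + y) ` Bs)"
  proof
    fix x :: "'a^'n"
    obtain c where "c \<in> C" "rk K (x - c) \<le> \<rho>" using cover by blast
    then show "x \<in> (\<Union>c\<in>C. (\<lambda>y. c + y) ` Bs)"
      by (auto simp: Bs_def intro!: bexI[of _ c] image_eqI[of _ _ "x - c"])
  qed
  then have "card (UNIV :: ('a^'n) set) \<le> card (\<Union>c\<in>C. (\<lambda>y. c + y) ` Bs)" by (intro card_mono) auto
  also have "\<dots> \<le> (\<Sum>c\<in>C. card ((\<lambda>y. c + y) ` Bs))" by (rule card_UN_le[OF finC])
  also have "\<dots> \<le> (\<Sum>c\<in>C. card Bs)" by (intro sum_mono card_image_le) auto
  also have "\<dots> = card C * card Bs" by simp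
  finally have cov: "q ^ (m * n) \<le> q ^ (m * k) * card Bs"
    using card_subspace[OF assms(5)] assms(3,6) by (simp add: n_def power_mult)
  have cnt: "card Bs * (\<Prod>i<\<rho>. (q ^ \<rho> - q ^ i)) \<le> (\<Prod>i<\<rho>. (q ^ m - q ^ i)) * (q ^ \<rho>) ^ n"
    using count_low_rank[OF K cardA q2' rm, where 'n='n] assms(2,3) by (simp add: Bs_def n_def)
  define Q where "Q = real q"
  have Q2: "Q \<ge> 2" using q2 by (simp add: Q_def)
  define S where "S = (\<Sum>k. 1 / (real (Suc k) * (Q ^ Suc k - 1)))"
  define P where "P = (\<Prod>j\<in>{1..\<rho>}. 1 / (1 - (1/Q) ^ j))"
  have PS: "P < exp S" unfolding P_def S_def by (rule prod_sigma_bound[OF Q2])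
  have c1: "real (\<Prod>i<\<rho>. (q ^ \<rho> - q ^ i)) = (\<Prod>i<\<rho>. (Q ^ \<rho> - Q ^ i))"
    unfolding of_nat_prod Q_def using q2
    by (intro prod.cong refl) (auto simp: of_nat_diff power_increasing)
  have c2: "real (\<Prod>i<\<rho>. (q ^ m - q ^ i)) = (\<Prod>i<\<rho>. (Q ^ m - Q ^ i))"
    unfolding of_nat_prod Q_def using q2 rm
    by (intro prod.cong refl) (auto simp: of_nat_diff power_increasing)
  have Dpos: "0 < (\<Prod>i<\<rho>. (Q ^ \<rho> - Q ^ i))"
    using Q2 by (intro prod_pos) (auto intro: power_strict_increasing)
  have cntR: "real (card Bs) * (\<Prod>i<\<rho>. (Q ^ \<rho> - Q ^ i)) \<le> (\<Prod>i<\<rho>. (Q ^ m - Q ^ i)) * (Q ^ \<rho>) ^ n"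
  proof -
    have "real (card Bs * (\<Prod>i<\<rho>. (q ^ \<rho> - q ^ i))) \<le> real ((\<Prod>i<\<rho>. (q ^ m - q ^ i)) * (q ^ \<rho>) ^ n)"
      using cnt by (simp only: of_nat_le_iff)
    then show ?thesis using c1 c2 by (simp add: Q_def)
  qed
  have "real (card Bs) \<le> (Q ^ \<rho>) ^ n * ((\<Prod>i<\<rho>. (Q ^ m - Q ^ i)) / (\<Prod>i<\<rho>. (Q ^ \<rho> - Q ^ i)))"
    using cntR Dpos by (simp add: field_simps)
  also have "(\<Prod>i<\<rho>. (Q ^ m - Q ^ i)) / (\<Prod>i<\<rho>. (Q ^ \<rho> - Q ^ i)) = (\<Prod>i<\<rho>. (Q^m - Q^i) / (Q^\<rho> - Q^i))"
    by (simp add: prod_dividef)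
  also have "(Q ^ \<rho>) ^ n * \<dots> \<le> (Q ^ \<rho>) ^ n * (Q^(\<rho>*(m-\<rho>)) * P)"
    unfolding P_def using Q2 by (intro mult_left_mono ratio_bound rm) auto
  finally have bs: "real (card Bs) \<le> Q ^ (\<rho> * n + \<rho> * (m - \<rho>)) * P"
    by (simp add: power_add power_mult mult.assoc)
  have "Q ^ (m * k) * Q ^ (m * (n - k)) = Q ^ (m * n)"
    using kn by (simp add: power_add[symmetric] diff_mult_distrib2)
  also have "Q ^ (m * n) \<le> Q ^ (m * k) * real (card Bs)"
  proof -
    have "real (q ^ (m * n)) \<le> real (q ^ (m * k) * card Bs)" using cov by (simp only: of_nat_le_iff)
    then show ?thesis by (simp add: Q_def)
  qed
  also have "\<dots> \<le> Q ^ (m * k) * (Q ^ (\<rho> * n + \<rho> * (m - \<rho>)) * P)"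
    using bs Q2 by (intro mult_left_mono) auto
  also have "\<dots> < Q ^ (m * k) * (Q ^ (\<rho> * n + \<rho> * (m - \<rho>)) * exp S)"
    using PS Q2 by (intro mult_strict_left_mono) auto
  finally have "Q ^ (m * (n - k)) < Q ^ (\<rho> * n + \<rho> * (m - \<rho>)) * exp S"
    using Q2 by simp
  then have "ln (Q ^ (m * (n - k))) < ln (Q ^ (\<rho> * n + \<rho> * (m - \<rho>)) * exp S)"
    using Q2 by (subst ln_less_cancel_iff) auto
  then have "real (m * (n - k)) * ln Q < real (\<rho> * n + \<rho> * (m - \<rho>)) * ln Q + S"
    using Q2 by (simp add: ln_mult ln_realpow)
  moreover have "S = ln Q * sigma q" using Q2 by (simp add: sigma_def S_def Q_def)
  moreover have "ln Q > 0" using Q2 by simp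
  ultimately have "real (m * (n - k)) * ln Q < (real (\<rho> * n + \<rho> * (m - \<rho>)) + sigma q) * ln Q"
    by (simp add: algebra_simps)
  then have "real (m * (n - k)) < real (\<rho> * n + \<rho> * (m - \<rho>)) + sigma q"
    using \<open>ln Q > 0\<close> by (simp only: mult_less_cancel_right_pos)
  then have ineq: "real m * (real n - real k) < real \<rho> * real n + real \<rho> * (real m - real \<rho>) + sigma q"
    using kn rm by (simp add: of_nat_diff)
  have "real n - real \<rho> - (real \<rho> * (real n - real \<rho>) + sigma q) / real m < real k"
  proof -
    have "real m * (real n - real \<rho> - (real \<rho> * (real n - real \<rho>) + sigma q) / real m)
        = real m * (real n - real \<rho>) - (real \<rho> * (real n - real \<rho>) + sigma q)"
      using m0 by (simp add: field_simps)
    also have "\<dots> < real m * real k" using ineq by (simp add: algebra_simps)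
    finally show ?thesis using m0 by (simp add: mult_less_cancel_left_pos)
  qed
  then have "\<lfloor>real n - real \<rho> - (real \<rho> * (real n - real \<rho>) + sigma q) / real m\<rfloor> < int k"
    by (simp add: floor_less_iff)
  then show ?thesis using kn by (simp add: n_def)
qed

end
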